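(* Let $\mathbf P=UV^\top$ be the transition matrix of a Markov chain on $\{1,\dots,p\}$ with stationary distribution $\pi$ having all entries positive, where $U,V\in\mathbb R^{p\times r}$ are entrywise nonnegative with $U\mathbf 1_r=\mathbf 1_p$, $V^\top\mathbf 1_p=\mathbf 1_r$, each meta-state has an anchor state, and $\mathrm{rank}(U)=r$. Let $\mathbf h_1,\dots,\mathbf h_r$ be the right singular vectors of $\mathbf Q=\mathrm{diag}(\pi)\mathbf P[\mathrm{diag}(\pi)]^{-1/2}$ associated with its nonzero singular values $\sigma_1\ge\dots\ge\sigma_r$, and assume $\mathbf h_1$ has all coordinates positive. Let $\mathbf D=[\mathrm{diag}(\mathbf h_1)]^{-1}[\mathbf h_2,\dots,\mathbf h_r]\in\mathbb R^{p\times(r-1)}$. Then there exists a simplex $\mathcal S_0^*\subset\mathbb R^{r-1}$ with $r$ vertices $\mathbf b_1,\dots,\mathbf b_r$ such that all rows of $\mathbf D$ are contained in this simplex. Furthermore, for all anchor states $j$ of a same meta-state, the $j$-th row of $\mathbf D$ falls exactly onto one vertex of this simplex.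
   Context: A state $j$ is an anchor state of meta-state $k$ if $V_{jk}>0$ and $V_{js}=0$ for all $s\neq k$. *)

theory Defs
  imports "Jordan_Normal_Form.DL_Rank"
begin

definition diag_of_vec :: "real vec \<Rightarrow> real mat" where
  "diag_of_vec v = mat (dim_vec v) (dim_vec v) (\<lambda>(i,j). if i = j then v $ i else 0)"

definition nonneg_mat :: "real mat \<Rightarrow> bool" where
  "nonneg_mat A \<longleftrightarrow> (\<forall>i<dim_row A. \<forall>j<dim_col A. A $$ (i,j) \<ge> 0)"

definition transition_mat :: "nat \<Rightarrow> real mat \<Rightarrow> bool" where
  "transition_mat p P \<longleftrightarrow> P \<in> carrier_mat p p \<and> nonneg_mat P \<and>
     (\<forall>i<p. (\<Sum>j<p. P $$ (i,j)) = 1)"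

definition stationary_dist :: "nat \<Rightarrow> real mat \<Rightarrow> real vec \<Rightarrow> bool" where
  "stationary_dist p P \<pi> \<longleftrightarrow> \<pi> \<in> carrier_vec p \<and> (\<forall>i<p. \<pi> $ i \<ge> 0) \<and>
     (\<Sum>i<p. \<pi> $ i) = 1 \<and> transpose_mat P *\<^sub>v \<pi> = \<pi>"

definition anchor_state :: "real mat \<Rightarrow> nat \<Rightarrow> nat \<Rightarrow> bool" where
  "anchor_state V j k \<longleftrightarrow> j < dim_row V \<and> k < dim_col V \<and> V $$ (j,k) > 0 \<and>
     (\<forall>s<dim_col V. s \<noteq> k \<longrightarrow> V $$ (j,s) = 0)"

definition right_singular_vector :: "real mat \<Rightarrow> real \<Rightarrow> real vec \<Rightarrow> bool" where
  "right_singular_vector Q \<sigma> h \<longleftrightarrow> h \<in> carrier_vec (dim_col Q) \<and> h \<bullet> h = 1 \<and>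
     (\<exists>u \<in> carrier_vec (dim_row Q). u \<bullet> u = 1 \<and> Q *\<^sub>v h = \<sigma> \<cdot>\<^sub>v u \<and>
        transpose_mat Q *\<^sub>v u = \<sigma> \<cdot>\<^sub>v h)"

(* b 0, ..., b (r-1) are the r vertices of a simplex in R^d (affinely independent) *)
definition simplex_vertices :: "nat \<Rightarrow> nat \<Rightarrow> (nat \<Rightarrow> real vec) \<Rightarrow> bool" where
  "simplex_vertices d r b \<longleftrightarrow> (\<forall>k<r. b k \<in> carrier_vec d) \<and>
     (\<forall>c::nat \<Rightarrow> real. (\<Sum>k<r. c k) = 0 \<and> (\<forall>i<d. (\<Sum>k<r. c k * b k $ i) = 0)
         \<longrightarrow> (\<forall>k<r. c k = 0))"

definition in_simplex :: "nat \<Rightarrow> nat \<Rightarrow> (nat \<Rightarrow> real vec) \<Rightarrow> real vec \<Rightarrow> bool" where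
  "in_simplex d r b x \<longleftrightarrow> x \<in> carrier_vec d \<and>
     (\<exists>w::nat \<Rightarrow> real. (\<forall>k<r. w k \<ge> 0) \<and> (\<Sum>k<r. w k) = 1 \<and>
        (\<forall>i<d. x $ i = (\<Sum>k<r. w k * b k $ i)))"

end

theory Submission imports Defs begin
lemma ifmul: "(if c then (a::real) else 0) * b = (if c then a * b else 0)" by simp

lemma Qentry:
  assumes U: "U \<in> carrier_mat p r" and V: "V \<in> carrier_mat p r"
    and pi: "\<pi> \<in> carrier_vec p"
    and Q_def: "Q = diag_of_vec \<pi> * (U * transpose_mat V) *
                  mat p p (\<lambda>(i,j). if i = j then 1 / sqrt (\<pi> $ i) else 0)"
    and i: "i < p" and j: "j < p"
  shows "Q $$ (i,j) = \<pi> $ i * (\<Sum>s<r. U $$ (i,s) * V $$ (j,s)) / sqrt (\<pi> $ j)"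
proof -
  have P: "(U * transpose_mat V) $$ (t,j) = (\<Sum>s<r. U $$ (t,s) * V $$ (j,s))" if "t < p" "j < p" for t j
    using U V that by (simp add: scalar_prod_def lessThan_atLeast0)
  have DP: "(diag_of_vec \<pi> * (U * transpose_mat V)) $$ (i,t) = \<pi> $ i * (U * transpose_mat V) $$ (i,t)" if "t < p" for t
    using U V pi that i by (simp add: scalar_prod_def diag_of_vec_def ifmul lessThan_atLeast0)
  have Mc: "diag_of_vec \<pi> * (U * transpose_mat V) \<in> carrier_mat p p"
    using U V pi unfolding diag_of_vec_def carrier_mat_def carrier_vec_def by simp
  have MD: "(M * mat p p (\<lambda>(i,j). if i = j then 1 / sqrt (\<pi> $ i) else 0)) $$ (i,j) = M $$ (i,j) / sqrt (\<pi> $ j)"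
    if "M \<in> carrier_mat p p" for M
    using that i j by (simp add: scalar_prod_def ifmul mult.commute[of _ "if _ then _ else _"] cong: if_cong)
  show ?thesis
    unfolding Q_def MD[OF Mc] DP[OF j] P[OF i j] by simp
qed

lemma anchor_sum:
  assumes "anchor_state V j k" "V \<in> carrier_mat p r" "k < r"
  shows "(\<Sum>s<r. V $$ (j,s) * f s) = V $$ (j,k) * f k"
proof -
  have "(\<Sum>s<r. V $$ (j,s) * f s) = (\<Sum>s<r. if s = k then V $$ (j,k) * f k else 0)"
    using assms by (intro sum.cong) (auto simp: anchor_state_def)
  also have "\<dots> = V $$ (j,k) * f k" using assms(3) by simp
  finally show ?thesis .
qed

theorem mainTheorem14:
  fixes p r :: nat
    and U V P Q D :: "real mat"
    and \<pi> :: "real vec"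
    and h :: "nat \<Rightarrow> real vec"
    and \<sigma> :: "nat \<Rightarrow> real"
  assumes U: "U \<in> carrier_mat p r" and V: "V \<in> carrier_mat p r"
    and nonnegU: "nonneg_mat U" and nonnegV: "nonneg_mat V"
    and U1: "U *\<^sub>v vec r (\<lambda>_. 1) = vec p (\<lambda>_. 1)"
    and V1: "transpose_mat V *\<^sub>v vec p (\<lambda>_. 1) = vec r (\<lambda>_. 1)"
    and P_def: "P = U * transpose_mat V"
    and transP: "transition_mat p P"
    and stat: "stationary_dist p P \<pi>"
    and pi_pos: "\<forall>i<p. \<pi> $ i > 0"
    and anchors: "\<forall>k<r. \<exists>j. anchor_state V j k"
    and rankU: "vec_space.rank p U = r"
    and Q_def: "Q = diag_of_vec \<pi> * P *
                  mat p p (\<lambda>(i,j). if i = j then 1 / sqrt (\<pi> $ i) else 0)"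
    and sv_pos: "\<forall>k<r. \<sigma> k > 0"
    and sv_ord: "\<forall>k l. k \<le> l \<and> l < r \<longrightarrow> \<sigma> l \<le> \<sigma> k"
    and h_sv: "\<forall>k<r. right_singular_vector Q (\<sigma> k) (h k)"
    and h_orth: "\<forall>k<r. \<forall>l<r. k \<noteq> l \<longrightarrow> h k \<bullet> h l = 0"
    and h1_pos: "\<forall>j<p. h 0 $ j > 0"
    and D_def: "D = mat p (r - 1) (\<lambda>(j,i). h (i + 1) $ j / h 0 $ j)"
  shows "\<exists>b. simplex_vertices (r - 1) r b \<and>
            (\<forall>j<p. in_simplex (r - 1) r b (row D j)) \<and>
            (\<forall>k<r. \<forall>j. anchor_state V j k \<longrightarrow> row D j = b k)"
proof -
  have pi: "\<pi> \<in> carrier_vec p" using stat by (simp add: stationary_dist_def)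
  have Qe: "Q $$ (i,j) = \<pi> $ i * (\<Sum>s<r. U $$ (i,s) * V $$ (j,s)) / sqrt (\<pi> $ j)"
    if "i < p" "j < p" for i j
    using Qentry[OF U V pi Q_def[unfolded P_def] that] .
  have Qc: "Q \<in> carrier_mat p p"
    using U V pi unfolding Q_def P_def diag_of_vec_def carrier_mat_def carrier_vec_def by simp
  have hc: "h k \<in> carrier_vec p" if "k < r" for k
    using h_sv that Qc by (auto simp: right_singular_vector_def)
  have hh: "h k \<bullet> h k = 1" if "k < r" for k
    using h_sv that by (auto simp: right_singular_vector_def)
  have key: "\<exists>cv. \<forall>j<p. h k $ j = (\<Sum>s<r. V $$ (j,s) * cv s) / sqrt (\<pi> $ j)" if k: "k < r" for k
  proof -
    obtain u where u: "u \<in> carrier_vec p" "transpose_mat Q *\<^sub>v u = \<sigma> k \<cdot>\<^sub>v h k"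
      using h_sv k Qc by (auto simp: right_singular_vector_def)
    define cv where "cv s = (\<Sum>i<p. \<pi> $ i * U $$ (i,s) * u $ i) / \<sigma> k" for s
    have "\<forall>j<p. h k $ j = (\<Sum>s<r. V $$ (j,s) * cv s) / sqrt (\<pi> $ j)"
    proof (intro allI impI)
      fix j assume j: "j < p"
      have "(transpose_mat Q *\<^sub>v u) $ j = (\<Sum>i<p. Q $$ (i,j) * u $ i)"
        using u(1) Qc j by (simp add: scalar_prod_def lessThan_atLeast0)
      also have "\<dots> = (\<Sum>i<p. \<Sum>s<r. \<pi> $ i * U $$ (i,s) * V $$ (j,s) * u $ i / sqrt (\<pi> $ j))"
        using j by (intro sum.cong) (auto simp: Qe sum_distrib_left sum_distrib_right sum_divide_distrib mult_ac)
      also have "\<dots> = (\<Sum>s<r. \<Sum>i<p. \<pi> $ i * U $$ (i,s) * V $$ (j,s) * u $ i / sqrt (\<pi> $ j))"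
        by (rule sum.swap)
      also have "\<dots> = \<sigma> k * ((\<Sum>s<r. V $$ (j,s) * cv s) / sqrt (\<pi> $ j))"
        using sv_pos k unfolding cv_def
        by (subgoal_tac "\<sigma> k \<noteq> 0", simp_all add: sum_distrib_left sum_distrib_right sum_divide_distrib mult_ac, force)
      finally have "\<sigma> k * h k $ j = \<sigma> k * ((\<Sum>s<r. V $$ (j,s) * cv s) / sqrt (\<pi> $ j))"
        using u(2) j hc[OF k] by simp
      then show "h k $ j = (\<Sum>s<r. V $$ (j,s) * cv s) / sqrt (\<pi> $ j)"
      proof -
        have "\<sigma> k \<noteq> 0" using sv_pos k by force
        with \<open>\<sigma> k * h k $ j = _\<close> show ?thesis by (metis times_divide_eq_right mult_left_cancel)
      qed
    qed
    then show ?thesis by blast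
  qed
  then obtain c where c: "\<And>k j. k < r \<Longrightarrow> j < p \<Longrightarrow> h k $ j = (\<Sum>s<r. V $$ (j,s) * c k s) / sqrt (\<pi> $ j)"
    by metis
  have Vc: "dim_row V = p" "dim_col V = r" using V by auto
  have anc_p: "j < p" if "anchor_state V j k" for j k using that Vc by (simp add: anchor_state_def)
  have hanc: "h l $ j = V $$ (j,k) * c l k / sqrt (\<pi> $ j)"
    if a: "anchor_state V j k" and k: "k < r" and l: "l < r" for j k l
    using c[OF l anc_p[OF a]] anchor_sum[OF a V k] by simp
  obtain a where a: "\<And>k. k < r \<Longrightarrow> anchor_state V (a k) k" using anchors by metis
  have Vanc: "V $$ (j,k) > 0" if "anchor_state V j k" for j k using that by (simp add: anchor_state_def)
  have sqpos: "sqrt (\<pi> $ j) > 0" if "j < p" for j using pi_pos that by simp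
  have c0: "c 0 k > 0" if k: "k < r" for k
  proof -
    have "h 0 $ a k > 0" using h1_pos anc_p[OF a[OF k]] by simp
    then have "V $$ (a k, k) * c 0 k / sqrt (\<pi> $ a k) > 0"
      using hanc[OF a[OF k] k] k by simp
    then show ?thesis using Vanc[OF a[OF k]] sqpos[OF anc_p[OF a[OF k]]]
      by (simp add: zero_less_divide_iff zero_less_mult_iff)
  qed
  define b where "b k = vec (r - 1) (\<lambda>i. c (i + 1) k / c 0 k)" for k
  have Dc: "D \<in> carrier_mat p (r - 1)" unfolding D_def by simp
  have rowD: "row D j $ i = h (i + 1) $ j / h 0 $ j" if "j < p" "i < r - 1" for i j
    using that unfolding D_def by simp
  have part3: "\<forall>k<r. \<forall>j. anchor_state V j k \<longrightarrow> row D j = b k"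
  proof (intro allI impI)
    fix k j assume k: "k < r" and aj: "anchor_state V j k"
    have j: "j < p" using anc_p[OF aj] .
    show "row D j = b k"
    proof (rule eq_vecI)
      show "dim_vec (row D j) = dim_vec (b k)" using Dc by (simp add: b_def)
      fix i assume "i < dim_vec (b k)"
      then have i: "i < r - 1" by (simp add: b_def)
      have "row D j $ i = (V $$ (j,k) * c (i+1) k / sqrt (\<pi> $ j)) / (V $$ (j,k) * c 0 k / sqrt (\<pi> $ j))"
        using rowD[OF j i] hanc[OF aj k, of "i+1"] hanc[OF aj k, of 0] i k by simp
      also have "\<dots> = c (i+1) k / c 0 k"
        using Vanc[OF aj] sqpos[OF j] c0[OF k] by (simp add: field_simps)
      finally show "row D j $ i = b k $ i" using i by (simp add: b_def)
    qed
  qed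
  have part2: "\<forall>j<p. in_simplex (r - 1) r b (row D j)"
  proof (intro allI impI)
    fix j assume j: "j < p"
    have r0: "0 < r"
    proof (rule ccontr)
      assume "\<not> 0 < r"
      then have "r = 0" by simp
      then have "(U *\<^sub>v vec r (\<lambda>_. 1)) $ j = 0" using U j by (simp add: scalar_prod_def)
      then show False using U1 j by simp
    qed
    define S where "S = (\<Sum>s<r. V $$ (j,s) * c 0 s)"
    have "S / sqrt (\<pi> $ j) > 0" using h1_pos j c[OF r0 j] unfolding S_def by metis
    then have Spos: "S > 0" using sqpos[OF j] by (simp add: zero_less_divide_iff)
    define w where "w k = V $$ (j,k) * c 0 k / S" for k
    have Vnn: "V $$ (j,k) \<ge> 0" if "k < r" for k using nonnegV that j Vc by (simp add: nonneg_mat_def)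
    have w1: "0 \<le> w k" if "k < r" for k
      using Vnn[OF that] c0[OF that] Spos unfolding w_def by simp
    have w2: "(\<Sum>k<r. w k) = 1"
    proof -
      have "(\<Sum>k<r. w k) = S / S" unfolding w_def S_def by (rule sum_divide_distrib[symmetric])
      then show ?thesis using Spos by simp
    qed
    have w3: "row D j $ i = (\<Sum>k<r. w k * b k $ i)" if i: "i < r - 1" for i
    proof -
      have "row D j $ i = ((\<Sum>s<r. V $$ (j,s) * c (i+1) s) / sqrt (\<pi> $ j)) / (S / sqrt (\<pi> $ j))"
      proof -
        have i1: "i + 1 < r" using i by simp
        have e1: "h (i+1) $ j = (\<Sum>s<r. V $$ (j,s) * c (i+1) s) / sqrt (\<pi> $ j)"
          by (rule c[OF i1 j])
        have e0: "h 0 $ j = S / sqrt (\<pi> $ j)" unfolding S_def by (rule c[OF r0 j])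
        show ?thesis unfolding rowD[OF j i] e1 e0 ..
      qed
      also have "\<dots> = (\<Sum>s<r. V $$ (j,s) * c (i+1) s) / S"
        using sqpos[OF j] by simp
      also have "\<dots> = (\<Sum>k<r. w k * b k $ i)"
        unfolding sum_divide_distrib
      proof (rule sum.cong)
        fix k assume "k \<in> {..<r}"
        then have k: "k < r" by simp
        show "V $$ (j,k) * c (i+1) k / S = w k * b k $ i"
          using i c0[OF k] by (simp add: w_def b_def)
      qed simp
      finally show ?thesis .
    qed
    show "in_simplex (r - 1) r b (row D j)"
    proof -
      have rc: "row D j \<in> carrier_vec (r - 1)" by (rule row_carrier_vec[OF j Dc])
      have "\<exists>w::nat \<Rightarrow> real. (\<forall>k<r. w k \<ge> 0) \<and> (\<Sum>k<r. w k) = 1 \<and>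
        (\<forall>i<r - 1. row D j $ i = (\<Sum>k<r. w k * b k $ i))"
        using w1 w2 w3 by blast
      with rc show ?thesis unfolding in_simplex_def by blast
    qed
  qed
  have part1: "simplex_vertices (r - 1) r b"
    unfolding simplex_vertices_def
  proof (intro conjI allI impI)
    show "b k \<in> carrier_vec (r - 1)" for k by (simp add: b_def)
    fix cf :: "nat \<Rightarrow> real" and k
    assume H: "(\<Sum>k<r. cf k) = 0 \<and> (\<forall>i<r - 1. (\<Sum>k<r. cf k * b k $ i) = 0)" and k: "k < r"
    define \<gamma> where "\<gamma> = vec r (\<lambda>k. cf k / c 0 k)"
    define C where "C = mat r r (\<lambda>(l,k). c l k)"
    have Cc: "C \<in> carrier_mat r r" by (simp add: C_def)
    have G: "(\<Sum>k<r. c l k * (cf k / c 0 k)) = 0" if l: "l < r" for l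
    proof (cases l)
      case 0
      have "(\<Sum>k<r. c l k * (cf k / c 0 k)) = (\<Sum>k<r. cf k)"
        using c0 0 by (intro sum.cong) (auto dest: c0 intro: less_imp_neq)
      then show ?thesis using H by simp
    next
      case (Suc i)
      then have i: "i < r - 1" using l by simp
      have "(\<Sum>k<r. c l k * (cf k / c 0 k)) = (\<Sum>k<r. cf k * b k $ i)"
        using c0 Suc i by (intro sum.cong) (auto simp: b_def dest: c0)
      then show ?thesis using H i by simp
    qed
    have Cg: "C *\<^sub>v \<gamma> = 0\<^sub>v r"
      by (rule eq_vecI) (auto simp: C_def \<gamma>_def scalar_prod_def lessThan_atLeast0[symmetric] G[simplified])
    have detC: "det C \<noteq> 0"
    proof
      assume "det C = 0"
      then have "det (transpose_mat C) = 0" using det_transpose[OF Cc] by simp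
      then obtain v where v: "v \<in> carrier_vec r" "v \<noteq> 0\<^sub>v r" "transpose_mat C *\<^sub>v v = 0\<^sub>v r"
        using det_0_iff_vec_prod_zero[of "transpose_mat C" r] Cc by auto
      have vk: "(\<Sum>l<r. c l s * v $ l) = 0" if s: "s < r" for s
      proof -
        have "(transpose_mat C *\<^sub>v v) $ s = 0" using v(3) s by simp
        then show ?thesis using v(1) s by (simp add: C_def scalar_prod_def lessThan_atLeast0)
      qed
      have hv: "(\<Sum>l<r. v $ l * h l $ j) = 0" if j: "j < p" for j
      proof -
        have "(\<Sum>l<r. v $ l * h l $ j) = (\<Sum>l<r. \<Sum>s<r. v $ l * V $$ (j,s) * c l s / sqrt (\<pi> $ j))"
          using c j by (simp add: sum_distrib_left sum_divide_distrib mult_ac)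
        also have "\<dots> = (\<Sum>s<r. \<Sum>l<r. v $ l * V $$ (j,s) * c l s / sqrt (\<pi> $ j))"
          by (rule sum.swap)
        also have "\<dots> = (\<Sum>s<r. V $$ (j,s) * (\<Sum>l<r. c l s * v $ l) / sqrt (\<pi> $ j))"
          by (simp add: sum_distrib_left sum_divide_distrib mult_ac)
        also have "\<dots> = 0" using vk by simp
        finally show ?thesis .
      qed
      have "v $ m = 0" if m: "m < r" for m
      proof -
        have dot: "h m \<bullet> h l = (\<Sum>j<p. h m $ j * h l $ j)" if "l < r" for l
          using hc[OF that] by (simp add: scalar_prod_def lessThan_atLeast0)
        have "v $ m = (\<Sum>l<r. v $ l * (h m \<bullet> h l))"
        proof -
          have "(\<Sum>l<r. v $ l * (h m \<bullet> h l)) = (\<Sum>l<r. if l = m then v $ m else 0)"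
            using h_orth hh m by (intro sum.cong) auto
          then show ?thesis using m by simp
        qed
        also have "\<dots> = (\<Sum>l<r. \<Sum>j<p. h m $ j * (v $ l * h l $ j))"
          using dot by (simp add: sum_distrib_left mult_ac)
        also have "\<dots> = (\<Sum>j<p. h m $ j * (\<Sum>l<r. v $ l * h l $ j))"
          by (subst sum.swap) (simp add: sum_distrib_left)
        also have "\<dots> = 0" using hv by simp
        finally show ?thesis .
      qed
      then have "v = 0\<^sub>v r" using v(1) by (intro eq_vecI) auto
      then show False using v(2) by simp
    qed
    have "\<gamma> = 0\<^sub>v r"
    proof (rule ccontr)
      assume "\<gamma> \<noteq> 0\<^sub>v r"
      moreover have "\<gamma> \<in> carrier_vec r" by (simp add: \<gamma>_def)
      ultimately have "det C = 0" using det_0_iff_vec_prod_zero[OF Cc] Cg by blast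
      then show False using detC by simp
    qed
    then have "\<gamma> $ k = 0" using k by simp
    then show "cf k = 0" using k c0[OF k] by (simp add: \<gamma>_def)
  qed
  show ?thesis using part1 part2 part3 by blast
qed
end
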